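(* Let $s,z\in\mathbb{N}$ with $\mu:=s+z\ge1$, let $\omega_1,\dots,\omega_s>0$, and let $p\in\mathbb{N}$. Then there exist a constant $c_\mu>0$ and continuous functions $c_i:\mathbb{R}_{>0}^{\mu-i}\to\mathbb{R}_{>0}$, $i\in\{1,\dots,\mu-1\}$, such that for all constants $a_1,\dots,a_\mu\in(0,1]$ and every trajectory $y(\cdot)$ of the closed-loop system $(\Sigma)$ with $u=\kappa(y)$ (both defined in the context, with these $a_i$), the control signal $U(t):=\kappa(y(t))$ satisfies, for all $k\in\{0,\dots,p\}$ and all $t\ge0$, $$|U^{(k)}(t)|\le a_\mu c_\mu+\sum_{i=1}^{\mu-1}a_i\,c_i(a_\mu,\dots,a_{i+1}).$$
   Context: Notation: $A_0=\begin{pmatrix}0&1\\-1&0\end{pmatrix}$, $b_0=\begin{pmatrix}0\\1\end{pmatrix}$; $\|\cdot\|$ is the Euclidean norm. Given $s,z\in\mathbb{N}$, $\mu=s+z\ge1$, $\omega_1,\dots,\omega_s>0$ and positive constants $a_1,\dots,a_\mu$, define for $1\le i\le\mu$: $\theta_{i,i+1}:=1$ and, for $i+2\le k\le\mu+1$, $\theta_{i,k}:=\prod_{h=i}^{k-2}\frac{1}{a_{h+1}}$; define $Q_{i,\mu}:=\prod_{l=i}^{\mu}a_l$. The system $(\Sigma)$ has state $y=(y_1,\dots,y_\mu)$ with $y_i\in\mathbb{R}^2$ for $i\le s$ and $y_i\in\mathbb{R}$ for $i>s$, input $u\in\mathbb{R}$, and reads $$\dot y_i=\omega_iA_0y_i+b_0\sum_{k=i+1}^{s}\theta_{i,k}b_0^Ty_k+b_0\sum_{k=s+1}^{\mu}\theta_{i,k}y_k+\theta_{i,\mu+1}b_0u,\quad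 i=1,\dots,s,$$ $$\dot y_i=\sum_{k=i+1}^{\mu}\theta_{i,k}y_k+\theta_{i,\mu+1}u,\quad i=s+1,\dots,\mu$$ (empty sums are zero). The feedback $\kappa$ is $$\kappa(y)=-\sum_{i=1}^{s}\frac{Q_{i,\mu}\,b_0^Ty_i}{\big(1+\sum_{m=i}^{\mu}\|y_m\|^2\big)^{1/2}}-\sum_{i=s+1}^{\mu}\frac{Q_{i,\mu}\,y_i}{\big(1+\sum_{m=i}^{\mu}\|y_m\|^2\big)^{1/2}}.$$ *)

theory Defs
  imports "HOL-Analysis.Analysis"
begin

text \<open>Components y_i for i = 1..s live in R^2, rendered as real \<times> real;
  components y_i for i = s+1..mu are real. A state is a pair (x, w) with
  x :: nat \<Rightarrow> real \<times> real (used at indices 1..s) and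
  w :: nat \<Rightarrow> real (used at indices s+1..mu).\<close>

definition A0 :: "real \<times> real \<Rightarrow> real \<times> real" where
  "A0 v = (snd v, - fst v)"

definition b0 :: "real \<times> real" where
  "b0 = (0, 1)"

definition b0T :: "real \<times> real \<Rightarrow> real" where
  "b0T v = b0 \<bullet> v"

definition theta :: "(nat \<Rightarrow> real) \<Rightarrow> nat \<Rightarrow> nat \<Rightarrow> real" where
  "theta a i k = (if k = i + 1 then 1 else (\<Prod>h\<in>{i..k-2}. 1 / a (h + 1)))"

definition Qc :: "(nat \<Rightarrow> real) \<Rightarrow> nat \<Rightarrow> nat \<Rightarrow> real" where
  "Qc a i mu = (\<Prod>l\<in>{i..mu}. a l)"

definition ynormsq :: "nat \<Rightarrow> (nat \<Rightarrow> real \<times> real) \<Rightarrow> (nat \<Rightarrow> real) \<Rightarrow> nat \<Rightarrow> real" where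
  "ynormsq s x w m = (if m \<le> s then (norm (x m))\<^sup>2 else (w m)\<^sup>2)"

definition kappa :: "nat \<Rightarrow> nat \<Rightarrow> (nat \<Rightarrow> real) \<Rightarrow> (nat \<Rightarrow> real \<times> real) \<Rightarrow> (nat \<Rightarrow> real) \<Rightarrow> real" where
  "kappa s z a x w =
     - (\<Sum>i=1..s. Qc a i (s+z) * b0T (x i) / sqrt (1 + (\<Sum>m=i..s+z. ynormsq s x w m)))
     - (\<Sum>i=s+1..s+z. Qc a i (s+z) * w i / sqrt (1 + (\<Sum>m=i..s+z. ynormsq s x w m)))"

definition rhs2 :: "nat \<Rightarrow> nat \<Rightarrow> (nat \<Rightarrow> real) \<Rightarrow> (nat \<Rightarrow> real) \<Rightarrow> (nat \<Rightarrow> real \<times> real) \<Rightarrow> (nat \<Rightarrow> real) \<Rightarrow> real \<Rightarrow> nat \<Rightarrow> real \<times> real" where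
  "rhs2 s z \<omega> a x w u i =
     \<omega> i *\<^sub>R A0 (x i)
     + (\<Sum>k=i+1..s. theta a i k * b0T (x k)) *\<^sub>R b0
     + (\<Sum>k=s+1..s+z. theta a i k * w k) *\<^sub>R b0
     + (theta a i (s+z+1) * u) *\<^sub>R b0"

definition rhs1 :: "nat \<Rightarrow> nat \<Rightarrow> (nat \<Rightarrow> real) \<Rightarrow> (nat \<Rightarrow> real) \<Rightarrow> real \<Rightarrow> nat \<Rightarrow> real" where
  "rhs1 s z a w u i =
     (\<Sum>k=i+1..s+z. theta a i k * w k) + theta a i (s+z+1) * u"

definition closed_loop_traj ::
  "nat \<Rightarrow> nat \<Rightarrow> (nat \<Rightarrow> real) \<Rightarrow> (nat \<Rightarrow> real) \<Rightarrow> (real \<Rightarrow> nat \<Rightarrow> real \<times> real) \<Rightarrow> (real \<Rightarrow> nat \<Rightarrow> real) \<Rightarrow> bool" where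
  "closed_loop_traj s z \<omega> a x w \<longleftrightarrow>
     (\<forall>t\<ge>0.
        (\<forall>i\<in>{1..s}. ((\<lambda>\<tau>. x \<tau> i) has_vector_derivative
            rhs2 s z \<omega> a (x t) (w t) (kappa s z a (x t) (w t)) i) (at t within {0..})) \<and>
        (\<forall>i\<in>{s+1..s+z}. ((\<lambda>\<tau>. w \<tau> i) has_real_derivative
            rhs1 s z a (w t) (kappa s z a (x t) (w t)) i) (at t within {0..})))"

text \<open>The domain (R_{>0})^{mu-i} of c_i, realised on the coordinates i+1..mu of a
  sequence (all other coordinates are 0), with the product topology.\<close>

definition posbox :: "nat \<Rightarrow> nat \<Rightarrow> (nat \<Rightarrow> real) set" where
  "posbox i mu = {v. (\<forall>j. i < j \<and> j \<le> mu \<longrightarrow> 0 < v j) \<and> (\<forall>j. \<not> (i < j \<and> j \<le> mu) \<longrightarrow> v j = 0)}"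

definition restr :: "nat \<Rightarrow> nat \<Rightarrow> (nat \<Rightarrow> real) \<Rightarrow> (nat \<Rightarrow> real)" where
  "restr i mu a = (\<lambda>j. if i < j \<and> j \<le> mu then a j else 0)"

end

theory Submission
  imports Defs
begin



type_synonym ex = "nat \<Rightarrow> int"
type_synonym blk = "nat \<times> nat \<times> (nat \<times> bool) list"
type_synonym trm = "real \<times> ex \<times> blk list"
type_synonym ytrm = "real \<times> ex \<times> (nat \<times> bool) list \<times> blk list"

definition ind :: "nat \<Rightarrow> nat \<Rightarrow> ex" where
  "ind j k = (\<lambda>l. if j \<le> l \<and> l \<le> k then 1 else 0)"

definition amon :: "nat \<Rightarrow> (nat \<Rightarrow> real) \<Rightarrow> ex \<Rightarrow> real" where
  "amon mu a e = (\<Prod>l\<in>{1..mu}. a l powi e l)"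

definition yv :: "nat \<Rightarrow> (nat \<Rightarrow> real \<times> real) \<Rightarrow> (nat \<Rightarrow> real) \<Rightarrow> nat \<times> bool \<Rightarrow> real" where
  "yv s x w y = (if fst y \<le> s then (if snd y then snd (x (fst y)) else fst (x (fst y))) else w (fst y))"

definition Rv :: "nat \<Rightarrow> nat \<Rightarrow> (nat \<Rightarrow> real \<times> real) \<Rightarrow> (nat \<Rightarrow> real) \<Rightarrow> nat \<Rightarrow> real" where
  "Rv s z x w i = 1 / sqrt (1 + (\<Sum>m=i..s+z. ynormsq s x w m))"

fun bv :: "nat \<Rightarrow> nat \<Rightarrow> (nat \<Rightarrow> real \<times> real) \<Rightarrow> (nat \<Rightarrow> real) \<Rightarrow> blk \<Rightarrow> real" where
  "bv s z x w (i, n, ys) = Rv s z x w i ^ n * prod_list (map (yv s x w) ys)"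

fun tv :: "nat \<Rightarrow> nat \<Rightarrow> (nat \<Rightarrow> real) \<Rightarrow> (nat \<Rightarrow> real \<times> real) \<Rightarrow> (nat \<Rightarrow> real) \<Rightarrow> trm \<Rightarrow> real" where
  "tv s z a x w (c, e, bs) = c * amon (s+z) a e * prod_list (map (bv s z x w) bs)"

definition pv :: "nat \<Rightarrow> nat \<Rightarrow> (nat \<Rightarrow> real) \<Rightarrow> (nat \<Rightarrow> real \<times> real) \<Rightarrow> (nat \<Rightarrow> real) \<Rightarrow> trm list \<Rightarrow> real" where
  "pv s z a x w P = sum_list (map (tv s z a x w) P)"

fun ytv :: "nat \<Rightarrow> nat \<Rightarrow> (nat \<Rightarrow> real) \<Rightarrow> (nat \<Rightarrow> real \<times> real) \<Rightarrow> (nat \<Rightarrow> real) \<Rightarrow> ytrm \<Rightarrow> real" where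
  "ytv s z a x w (c, e, ys, bs) = c * amon (s+z) a e * prod_list (map (yv s x w) ys) * prod_list (map (bv s z x w) bs)"

definition ypv :: "nat \<Rightarrow> nat \<Rightarrow> (nat \<Rightarrow> real) \<Rightarrow> (nat \<Rightarrow> real \<times> real) \<Rightarrow> (nat \<Rightarrow> real) \<Rightarrow> ytrm list \<Rightarrow> real" where
  "ypv s z a x w P = sum_list (map (ytv s z a x w) P)"

definition comps :: "nat \<Rightarrow> nat \<Rightarrow> bool list" where
  "comps s m = (if m \<le> s then [False, True] else [True])"

definition dY :: "nat \<Rightarrow> nat \<Rightarrow> (nat \<Rightarrow> real) \<Rightarrow> nat \<times> bool \<Rightarrow> ytrm list" where
 "dY s z \<omega> y =
   (if fst y \<le> s then (if snd y then [(- \<omega> (fst y), \<lambda>_. 0, [(fst y,False)], [])] else [(\<omega> (fst y), \<lambda>_. 0, [(fst y,True)], [])]) else [])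
   @ (if fst y \<le> s \<and> \<not> snd y then [] else
       map (\<lambda>k. (1, \<lambda>l. - ind (fst y+1) (k-1) l, [(k,True)], [])) [fst y+1..<s+z+1]
     @ map (\<lambda>j. (-1, \<lambda>l. ind j (s+z) l - ind (fst y+1) (s+z) l, [], [(j,1,[(j,True)])])) [1..<s+z+1])"

fun dys :: "nat \<Rightarrow> nat \<Rightarrow> (nat \<Rightarrow> real) \<Rightarrow> (nat \<times> bool) list \<Rightarrow> ytrm list" where
  "dys s z \<omega> [] = []"
| "dys s z \<omega> (y#ys) = map (\<lambda>(c,e,ys1,ex). (c,e,ys1@ys,ex)) (dY s z \<omega> y)
      @ map (\<lambda>(c,e,ys',ex). (c,e,y#ys',ex)) (dys s z \<omega> ys)"

fun dblk :: "nat \<Rightarrow> nat \<Rightarrow> (nat \<Rightarrow> real) \<Rightarrow> blk \<Rightarrow> trm list" where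
  "dblk s z \<omega> (i,n,ys) =
     concat (map (\<lambda>m. concat (map (\<lambda>c. map (\<lambda>(c',e,ys1,ex). (- real n * c', e, (i,n+2,(m,c)#ys1@ys) # ex))
          (dY s z \<omega> (m,c))) (comps s m))) [i..<s+z+1])
   @ map (\<lambda>(c,e,ys',ex). (c,e,(i,n,ys')#ex)) (dys s z \<omega> ys)"

fun dbs :: "nat \<Rightarrow> nat \<Rightarrow> (nat \<Rightarrow> real) \<Rightarrow> blk list \<Rightarrow> trm list" where
  "dbs s z \<omega> [] = []"
| "dbs s z \<omega> (b#bs) = map (\<lambda>(c,e,bs'). (c,e,bs'@bs)) (dblk s z \<omega> b)
     @ map (\<lambda>(c,e,bs'). (c,e,b#bs')) (dbs s z \<omega> bs)"

fun dtrm :: "nat \<Rightarrow> nat \<Rightarrow> (nat \<Rightarrow> real) \<Rightarrow> trm \<Rightarrow> trm list" where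
  "dtrm s z \<omega> (c,e,bs) = map (\<lambda>(c',e',bs'). (c*c', \<lambda>l. e l + e' l, bs')) (dbs s z \<omega> bs)"

definition dpoly :: "nat \<Rightarrow> nat \<Rightarrow> (nat \<Rightarrow> real) \<Rightarrow> trm list \<Rightarrow> trm list" where
  "dpoly s z \<omega> P = concat (map (dtrm s z \<omega>) P)"

definition Kp :: "nat \<Rightarrow> nat \<Rightarrow> trm list" where
  "Kp s z = map (\<lambda>j. (-1, ind j (s+z), [(j,1,[(j,True)])])) [1..<s+z+1]"

definition G :: "nat \<Rightarrow> nat \<Rightarrow> (nat \<Rightarrow> real) \<Rightarrow> nat \<Rightarrow> trm list" where
  "G s z \<omega> k = (dpoly s z \<omega> ^^ k) (Kp s z)"




lemma amon_add:
  assumes "\<forall>l\<in>{1..mu}. a l \<noteq> 0"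
  shows "amon mu a (\<lambda>l. e l + e' l) = amon mu a e * amon mu a e'"
  unfolding amon_def prod.distrib[symmetric]
  by (rule prod.cong) (use assms in \<open>auto simp: power_int_add\<close>)

lemma amon_ind:
  assumes "1 \<le> j" "k \<le> mu"
  shows "amon mu a (ind j k) = (\<Prod>l\<in>{j..k}. a l)"
proof -
  have "amon mu a (ind j k) = (\<Prod>l\<in>{1..mu}. if l \<in> {j..k} then a l else 1)"
    unfolding amon_def ind_def by (rule prod.cong) auto
  also have "\<dots> = (\<Prod>l\<in>{1..mu} \<inter> {j..k}. a l)"
    by (rule prod.inter_restrict[symmetric]) simp
  also have "{1..mu} \<inter> {j..k} = {j..k}" using assms by auto
  finally show ?thesis .
qed

lemma amon_nind:
  assumes "1 \<le> j" "k \<le> mu"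
  shows "amon mu a (\<lambda>l. - ind j k l) = (\<Prod>l\<in>{j..k}. 1 / a l)"
proof -
  have "amon mu a (\<lambda>l. - ind j k l) = (\<Prod>l\<in>{1..mu}. if l \<in> {j..k} then 1 / a l else 1)"
    unfolding amon_def ind_def by (rule prod.cong) (auto simp: power_int_minus divide_inverse)
  also have "\<dots> = (\<Prod>l\<in>{1..mu} \<inter> {j..k}. 1 / a l)"
    by (rule prod.inter_restrict[symmetric]) simp
  also have "{1..mu} \<inter> {j..k} = {j..k}" using assms by auto
  finally show ?thesis .
qed

lemma theta_eq:
  assumes "i+1 \<le> k" "k \<le> mu+1"
  shows "theta a i k = amon mu a (\<lambda>l. - ind (i+1) (k-1) l)"
proof (cases "k = i+1")
  case True
  then show ?thesis unfolding theta_def amon_def ind_def by (simp add: prod.neutral)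
next
  case False
  then have k2: "k \<ge> i+2" using assms by auto
  have "theta a i k = (\<Prod>h\<in>{i..k-2}. 1 / a (h+1))" using False by (simp add: theta_def)
  also have "\<dots> = (\<Prod>l\<in>{Suc i..Suc (k-2)}. 1 / a l)"
    by (subst prod.shift_bounds_cl_Suc_ivl) simp
  also have "Suc (k-2) = k - 1" using k2 by auto
  also have "(\<Prod>l\<in>{Suc i..k-1}. 1 / a l) = amon mu a (\<lambda>l. - ind (i+1) (k-1) l)"
    by (subst amon_nind) (use assms in auto)
  finally show ?thesis .
qed

lemma Qc_eq: "1 \<le> i \<Longrightarrow> Qc a i mu = amon mu a (ind i mu)"
  by (simp add: Qc_def amon_ind)

lemma sum_list_upt_eq: "sum_list (map f [m..<n]) = (\<Sum>i\<in>{m..<n}. f i)"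
  by (simp add: sum_list_distinct_conv_sum_set)

lemma kappa_eq: "kappa s z a X W = pv s z a X W (Kp s z)"
proof -
  have "pv s z a X W (Kp s z) = (\<Sum>j\<in>{1..<s+z+1}. - (amon (s+z) a (ind j (s+z)) * (Rv s z X W j * yv s X W (j,True))))"
    unfolding pv_def Kp_def by (simp add: sum_list_upt_eq comp_def)
  also have "{1..<s+z+1} = {1..s} \<union> {s+1..s+z}" by auto
  also have "(\<Sum>j\<in>{1..s} \<union> {s+1..s+z}. - (amon (s+z) a (ind j (s+z)) * (Rv s z X W j * yv s X W (j,True))))
     = (\<Sum>j\<in>{1..s}. - (amon (s+z) a (ind j (s+z)) * (Rv s z X W j * yv s X W (j,True))))
     + (\<Sum>j\<in>{s+1..s+z}. - (amon (s+z) a (ind j (s+z)) * (Rv s z X W j * yv s X W (j,True))))"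
    by (rule sum.union_disjoint) auto
  also have "(\<Sum>j\<in>{1..s}. - (amon (s+z) a (ind j (s+z)) * (Rv s z X W j * yv s X W (j,True))))
     = - (\<Sum>i=1..s. Qc a i (s+z) * b0T (X i) / sqrt (1 + (\<Sum>m=i..s+z. ynormsq s X W m)))"
    unfolding sum_negf[symmetric]
    by (rule sum.cong) (auto simp: Qc_eq Rv_def yv_def b0T_def b0_def inner_prod_def)
  also have "(\<Sum>j\<in>{s+1..s+z}. - (amon (s+z) a (ind j (s+z)) * (Rv s z X W j * yv s X W (j,True))))
     = - (\<Sum>i=s+1..s+z. Qc a i (s+z) * W i / sqrt (1 + (\<Sum>m=i..s+z. ynormsq s X W m)))"
    unfolding sum_negf[symmetric]
    by (rule sum.cong) (auto simp: Qc_eq Rv_def yv_def)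
  finally show ?thesis by (simp add: kappa_def)
qed




lemma pvK: "pv s z a X W (Kp s z) = (\<Sum>j\<in>{1..<s+z+1}. - (amon (s+z) a (ind j (s+z)) * (Rv s z X W j * yv s X W (j,True))))"
  unfolding pv_def Kp_def by (simp add: sum_list_upt_eq comp_def)

lemma amon_diff:
  assumes "\<forall>l\<in>{1..mu}. a l \<noteq> 0"
  shows "amon mu a (\<lambda>l. e l - e' l) = amon mu a e * amon mu a (\<lambda>l. - e' l)"
  using amon_add[OF assms, of e "\<lambda>l. - e' l"] by simp

lemma amon_zero: "amon mu a (\<lambda>_. 0) = 1"
  by (simp add: amon_def)

lemma rest_eq:
  assumes apos: "\<forall>i\<in>{1..s+z}. 0 < a i" and m: "m \<le> s+z"
  shows "ypv s z a X W (map (\<lambda>k. (1, \<lambda>l. - ind (m+1) (k-1) l, [(k,True)], [])) [m+1..<s+z+1]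
     @ map (\<lambda>j. (-1, \<lambda>l. ind j (s+z) l - ind (m+1) (s+z) l, [], [(j,1,[(j,True)])])) [1..<s+z+1])
   = (\<Sum>k=m+1..s+z. theta a m k * yv s X W (k,True)) + theta a m (s+z+1) * kappa s z a X W"
proof -
  have nz: "\<forall>l\<in>{1..s+z}. a l \<noteq> 0" using apos by auto
  have 1: "sum_list (map (ytv s z a X W) (map (\<lambda>k. (1, \<lambda>l. - ind (m+1) (k-1) l, [(k,True)], [])) [m+1..<s+z+1]))
      = (\<Sum>k=m+1..s+z. theta a m k * yv s X W (k,True))"
  proof -
    have "sum_list (map (ytv s z a X W) (map (\<lambda>k. (1, \<lambda>l. - ind (m+1) (k-1) l, [(k,True)], [])) [m+1..<s+z+1]))
       = (\<Sum>k\<in>{m+1..<s+z+1}. amon (s+z) a (\<lambda>l. - ind (m+1) (k-1) l) * yv s X W (k,True))"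
      by (simp add: sum_list_upt_eq comp_def)
    also have "\<dots> = (\<Sum>k=m+1..s+z. theta a m k * yv s X W (k,True))"
      by (rule sum.cong) (auto simp: theta_eq[where mu="s+z"])
    finally show ?thesis .
  qed
  have 2: "sum_list (map (ytv s z a X W) (map (\<lambda>j. (-1, \<lambda>l. ind j (s+z) l - ind (m+1) (s+z) l, [], [(j,1,[(j,True)])])) [1..<s+z+1]))
      = theta a m (s+z+1) * kappa s z a X W"
  proof -
    have "sum_list (map (ytv s z a X W) (map (\<lambda>j. (-1, \<lambda>l. ind j (s+z) l - ind (m+1) (s+z) l, [], [(j,1,[(j,True)])])) [1..<s+z+1]))
      = (\<Sum>j\<in>{1..<s+z+1}. amon (s+z) a (\<lambda>l. - ind (m+1) (s+z) l) * (- (amon (s+z) a (ind j (s+z)) * (Rv s z X W j * yv s X W (j,True)))))"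
      by (simp add: sum_list_upt_eq comp_def amon_diff[OF nz] mult_ac)
    also have "\<dots> = theta a m (s+z+1) * kappa s z a X W"
      unfolding sum_distrib_left[symmetric] kappa_eq pvK
      using theta_eq[of m "s+z+1" "s+z" a] m by simp
    finally show ?thesis .
  qed
  show ?thesis unfolding ypv_def map_append sum_list_append 1 2 ..
qed

lemma hvd_fst: "(f has_vector_derivative v) F \<Longrightarrow> ((\<lambda>\<tau>. fst (f \<tau>)) has_real_derivative fst v) F"
  unfolding has_vector_derivative_def has_field_derivative_def
  apply (drule has_derivative_fst) apply (erule has_derivative_eq_rhs) by (auto simp: fun_eq_iff)

lemma hvd_snd: "(f has_vector_derivative v) F \<Longrightarrow> ((\<lambda>\<tau>. snd (f \<tau>)) has_real_derivative snd v) F"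
  unfolding has_vector_derivative_def has_field_derivative_def
  apply (drule has_derivative_snd) apply (erule has_derivative_eq_rhs) by (auto simp: fun_eq_iff)

lemma Yderiv:
  assumes apos: "\<forall>i\<in>{1..s+z}. 0 < a i" and traj: "closed_loop_traj s z \<omega> a x w"
    and t: "t \<ge> 0" and y1: "1 \<le> fst y" and y2: "fst y \<le> s+z"
  shows "((\<lambda>\<tau>. yv s (x \<tau>) (w \<tau>) y) has_real_derivative ypv s z a (x t) (w t) (dY s z \<omega> y)) (at t within {0..})"
proof -
  obtain m c where y: "y = (m,c)" by (cases y)
  let ?U = "kappa s z a (x t) (w t)"
  let ?L = "map (\<lambda>k. (1, \<lambda>l. - ind (m+1) (k-1) l, [(k,True)], [])) [m+1..<s+z+1]
     @ map (\<lambda>j. (-1, \<lambda>l. ind j (s+z) l - ind (m+1) (s+z) l, [], [(j,1,[(j,True)])])) [1..<s+z+1]"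
  have R: "ypv s z a (x t) (w t) ?L = (\<Sum>k=m+1..s+z. theta a m k * yv s (x t) (w t) (k,True)) + theta a m (s+z+1) * ?U"
    using rest_eq[OF apos] y y2 by simp
  show ?thesis
  proof (cases "m \<le> s")
    case True
    then have "m \<in> {1..s}" using y y1 by auto
    then have D: "((\<lambda>\<tau>. x \<tau> m) has_vector_derivative rhs2 s z \<omega> a (x t) (w t) ?U m) (at t within {0..})"
      using traj t unfolding closed_loop_traj_def by blast
    show ?thesis
    proof (cases c)
      case False
      have "((\<lambda>\<tau>. fst (x \<tau> m)) has_real_derivative fst (rhs2 s z \<omega> a (x t) (w t) ?U m)) (at t within {0..})"
        by (rule hvd_fst[OF D])
      moreover have "fst (rhs2 s z \<omega> a (x t) (w t) ?U m) = ypv s z a (x t) (w t) (dY s z \<omega> y)"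
        using True False y by (simp add: rhs2_def A0_def b0_def dY_def ypv_def amon_zero yv_def)
      ultimately show ?thesis using True False y by (simp add: yv_def)
    next
      case c: True
      have "((\<lambda>\<tau>. snd (x \<tau> m)) has_real_derivative snd (rhs2 s z \<omega> a (x t) (w t) ?U m)) (at t within {0..})"
        by (rule hvd_snd[OF D])
      moreover have "snd (rhs2 s z \<omega> a (x t) (w t) ?U m) = ypv s z a (x t) (w t) (dY s z \<omega> y)"
      proof -
        have "dY s z \<omega> y = (- \<omega> m, \<lambda>_. 0, [(m,False)], []) # ?L"
          using True c y by (simp add: dY_def)
        then have E1: "ypv s z a (x t) (w t) (dY s z \<omega> y) = - \<omega> m * fst (x t m) + ypv s z a (x t) (w t) ?L"
          using True by (simp add: ypv_def amon_zero yv_def)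
        have E2: "(\<Sum>k=m+1..s+z. theta a m k * yv s (x t) (w t) (k,True))
            = (\<Sum>k=m+1..s. theta a m k * b0T (x t k)) + (\<Sum>k=s+1..s+z. theta a m k * w t k)"
        proof -
          have "{m+1..s+z} = {m+1..s} \<union> {s+1..s+z}" using True by auto
          then have "(\<Sum>k=m+1..s+z. theta a m k * yv s (x t) (w t) (k,True))
             = (\<Sum>k=m+1..s. theta a m k * yv s (x t) (w t) (k,True)) + (\<Sum>k=s+1..s+z. theta a m k * yv s (x t) (w t) (k,True))"
            by (simp add: sum.union_disjoint)
          also have "(\<Sum>k=m+1..s. theta a m k * yv s (x t) (w t) (k,True)) = (\<Sum>k=m+1..s. theta a m k * b0T (x t k))"
            by (rule sum.cong) (auto simp: yv_def b0T_def b0_def inner_prod_def)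
          also have "(\<Sum>k=s+1..s+z. theta a m k * yv s (x t) (w t) (k,True)) = (\<Sum>k=s+1..s+z. theta a m k * w t k)"
            by (rule sum.cong) (auto simp: yv_def)
          finally show ?thesis .
        qed
        show ?thesis using R E1 E2 by (simp add: rhs2_def A0_def b0_def)
      qed
      ultimately show ?thesis using True c y by (simp add: yv_def)
    qed
  next
    case False
    then have "m \<in> {s+1..s+z}" using y y2 by auto
    then have D: "((\<lambda>\<tau>. w \<tau> m) has_real_derivative rhs1 s z a (w t) ?U m) (at t within {0..})"
      using traj t unfolding closed_loop_traj_def by blast
    have "dY s z \<omega> y = ?L" using False y by (simp add: dY_def)
    moreover have "(\<Sum>k=m+1..s+z. theta a m k * yv s (x t) (w t) (k,True)) = (\<Sum>k=m+1..s+z. theta a m k * w t k)"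
      using False by (intro sum.cong) (auto simp: yv_def)
    ultimately have "ypv s z a (x t) (w t) (dY s z \<omega> y) = rhs1 s z a (w t) ?U m"
      using R by (simp add: rhs1_def)
    with D show ?thesis using False y by (simp add: yv_def)
  qed
qed

lemma ynormsq_eq: "ynormsq s X W m = (\<Sum>c\<in>set (comps s m). (yv s X W (m,c))^2)"
proof (cases "m \<le> s")
  case True
  obtain p q where "X m = (p,q)" by (cases "X m")
  then show ?thesis using True
    by (simp add: ynormsq_def comps_def yv_def norm_Pair)
next
  case False
  then show ?thesis by (simp add: ynormsq_def comps_def yv_def)
qed

lemma Rderiv:
  assumes apos: "\<forall>i\<in>{1..s+z}. 0 < a i" and traj: "closed_loop_traj s z \<omega> a x w"
    and t: "t \<ge> 0" and i1: "1 \<le> i"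
  shows "((\<lambda>\<tau>. Rv s z (x \<tau>) (w \<tau>) i) has_real_derivative
     (- ((Rv s z (x t) (w t) i)^3) * (\<Sum>m\<in>{i..s+z}. \<Sum>c\<in>set (comps s m). yv s (x t) (w t) (m,c) * ypv s z a (x t) (w t) (dY s z \<omega> (m,c)))))
     (at t within {0..})"
proof -
  define S where "S \<tau> = (\<Sum>m\<in>{i..s+z}. \<Sum>c\<in>set (comps s m). (yv s (x \<tau>) (w \<tau>) (m,c))^2)" for \<tau>
  define S' where "S' = (\<Sum>m\<in>{i..s+z}. \<Sum>c\<in>set (comps s m). yv s (x t) (w t) (m,c) * ypv s z a (x t) (w t) (dY s z \<omega> (m,c)))"
  have Rv_S: "Rv s z (x \<tau>) (w \<tau>) i = inverse (sqrt (1 + S \<tau>))" for \<tau>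
    unfolding Rv_def S_def by (simp add: ynormsq_eq divide_inverse)
  have S0: "S \<tau> \<ge> 0" for \<tau> unfolding S_def by (intro sum_nonneg) auto
  have dS: "(S has_real_derivative 2 * S') (at t within {0..})"
  proof -
    have "((\<lambda>\<tau>. S \<tau>) has_real_derivative (\<Sum>m\<in>{i..s+z}. \<Sum>c\<in>set (comps s m). 2 * (yv s (x t) (w t) (m,c) * ypv s z a (x t) (w t) (dY s z \<omega> (m,c))))) (at t within {0..})"
      unfolding S_def
    proof (intro DERIV_sum)
      fix m c assume m: "m \<in> {i..s+z}"
      have "((\<lambda>\<tau>. yv s (x \<tau>) (w \<tau>) (m,c)) has_real_derivative ypv s z a (x t) (w t) (dY s z \<omega> (m,c))) (at t within {0..})"
        using Yderiv[OF apos traj t] m i1 by auto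
      from DERIV_power[OF this, of 2]
      show "((\<lambda>\<tau>. (yv s (x \<tau>) (w \<tau>) (m,c))^2) has_real_derivative 2 * (yv s (x t) (w t) (m,c) * ypv s z a (x t) (w t) (dY s z \<omega> (m,c)))) (at t within {0..})"
        by (simp add: mult_ac)
    qed
    then show ?thesis unfolding S'_def by (simp add: sum_distrib_left)
  qed
  have dsq: "((\<lambda>\<tau>. sqrt (1 + S \<tau>)) has_real_derivative inverse (sqrt (1 + S t)) / 2 * (2 * S')) (at t within {0..})"
    apply (rule DERIV_chain2[where f = sqrt])
     apply (rule DERIV_real_sqrt) using S0[of t] apply simp
    using DERIV_add[OF DERIV_const dS] by simp
  have pos: "sqrt (1 + S t) \<noteq> 0" using S0[of t] by simp
  from DERIV_inverse_fun[OF dsq pos]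
  have "((\<lambda>\<tau>. inverse (sqrt (1 + S \<tau>))) has_real_derivative
     (- (inverse (sqrt (1 + S t)) / 2 * (2 * S') * inverse (sqrt (1 + S t) ^ Suc (Suc 0))))) (at t within {0..})" .
  moreover have "- (inverse (sqrt (1 + S t)) / 2 * (2 * S') * inverse (sqrt (1 + S t) ^ Suc (Suc 0))) = - ((inverse (sqrt (1 + S t)))^3) * S'"
  proof -
    have "inverse (sqrt (1+S t)) * inverse (sqrt (1+S t)) = inverse (1 + S t)"
      using S0[of t] by (simp add: inverse_mult_distrib[symmetric])
    then show ?thesis using S0[of t] by (simp add: power_inverse power3_eq_cube power2_eq_square)
  qed
  ultimately have H: "((\<lambda>\<tau>. inverse (sqrt (1 + S \<tau>))) has_real_derivative (- ((inverse (sqrt (1 + S t)))^3) * S')) (at t within {0..})"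
    by metis
  show ?thesis unfolding Rv_S S'_def[symmetric] by (rule H)
qed




lemma sum_list_map_app:
  "sum_list (map (ytv s z a X W \<circ> (\<lambda>(c,e,ys1,ex). (c,e,ys1@ys,ex))) L)
   = sum_list (map (ytv s z a X W) L) * prod_list (map (yv s X W) ys)"
  by (induction L) (auto simp: algebra_simps)

lemma sum_list_map_cons:
  "sum_list (map (ytv s z a X W \<circ> (\<lambda>(c,e,ys',ex). (c,e,y#ys',ex))) L)
   = yv s X W y * sum_list (map (ytv s z a X W) L)"
  by (induction L) (auto simp: algebra_simps)

lemma sum_list_map_concat: "sum_list (map f (concat (map g L))) = sum_list (map (\<lambda>l. sum_list (map f (g l))) L)"
  by (induction L) auto

lemma part2_eq:
  "sum_list (map (tv s z a X W) (map (\<lambda>(c,e,ys',ex). (c,e,(i,n,ys')#ex)) L))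
   = Rv s z X W i ^ n * sum_list (map (ytv s z a X W) L)"
  by (induction L) (auto simp: algebra_simps)

lemma part1_eq:
  "sum_list (map (tv s z a X W) (map (\<lambda>(c',e,ys1,ex). (- real n * c', e, (i,n+2,(m,c)#ys1@ys) # ex)) L))
   = - real n * Rv s z X W i ^ (n+2) * prod_list (map (yv s X W) ys) * yv s X W (m,c) * sum_list (map (ytv s z a X W) L)"
  by (induction L) (auto simp: algebra_simps)

lemma comps_sum: "sum_list (map f (comps s m)) = (\<Sum>c\<in>set (comps s m). f c)"
  by (rule sum_list_distinct_conv_sum_set) (simp add: comps_def)

context
  fixes s z :: nat and \<omega> a :: "nat \<Rightarrow> real" and x :: "real \<Rightarrow> nat \<Rightarrow> real \<times> real"
    and w :: "real \<Rightarrow> nat \<Rightarrow> real" and t :: real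
  assumes apos: "\<forall>i\<in>{1..s+z}. 0 < a i" and traj: "closed_loop_traj s z \<omega> a x w" and t: "t \<ge> 0"
begin

lemma dys_deriv:
  "\<forall>y\<in>set ys. 1 \<le> fst y \<and> fst y \<le> s+z \<Longrightarrow>
   ((\<lambda>\<tau>. prod_list (map (yv s (x \<tau>) (w \<tau>)) ys)) has_real_derivative ypv s z a (x t) (w t) (dys s z \<omega> ys)) (at t within {0..})"
proof (induction ys)
  case Nil
  then show ?case by (simp add: ypv_def)
next
  case (Cons y ys)
  have Dy: "((\<lambda>\<tau>. yv s (x \<tau>) (w \<tau>) y) has_real_derivative ypv s z a (x t) (w t) (dY s z \<omega> y)) (at t within {0..})"
    using Yderiv[OF apos traj t] Cons.prems by auto
  have Dys: "((\<lambda>\<tau>. prod_list (map (yv s (x \<tau>) (w \<tau>)) ys)) has_real_derivative ypv s z a (x t) (w t) (dys s z \<omega> ys)) (at t within {0..})"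
    using Cons by auto
  from DERIV_mult[OF Dy Dys] show ?case
    by (simp add: ypv_def sum_list_map_app sum_list_map_cons mult_ac)
qed

lemma dblk_deriv:
  assumes i: "1 \<le> i" and ys: "\<forall>y\<in>set ys. 1 \<le> fst y \<and> fst y \<le> s+z"
  shows "((\<lambda>\<tau>. bv s z (x \<tau>) (w \<tau>) (i,n,ys)) has_real_derivative pv s z a (x t) (w t) (dblk s z \<omega> (i,n,ys))) (at t within {0..})"
proof -
  let ?R = "Rv s z (x t) (w t) i"
  let ?P = "prod_list (map (yv s (x t) (w t)) ys)"
  let ?S = "\<Sum>m\<in>{i..s+z}. \<Sum>c\<in>set (comps s m). yv s (x t) (w t) (m,c) * ypv s z a (x t) (w t) (dY s z \<omega> (m,c))"
  have DR: "((\<lambda>\<tau>. Rv s z (x \<tau>) (w \<tau>) i) has_real_derivative (- (?R^3) * ?S)) (at t within {0..})"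
    by (rule Rderiv[OF apos traj t i])
  have Dys: "((\<lambda>\<tau>. prod_list (map (yv s (x \<tau>) (w \<tau>)) ys)) has_real_derivative ypv s z a (x t) (w t) (dys s z \<omega> ys)) (at t within {0..})"
    by (rule dys_deriv[OF ys])
  from DERIV_mult[OF DERIV_power[OF DR, of n] Dys]
  have D: "((\<lambda>\<tau>. Rv s z (x \<tau>) (w \<tau>) i ^ n * prod_list (map (yv s (x \<tau>) (w \<tau>)) ys)) has_real_derivative
      of_nat n * ((- (?R^3) * ?S) * ?R ^ (n - Suc 0)) * ?P + ypv s z a (x t) (w t) (dys s z \<omega> ys) * ?R ^ n) (at t within {0..})" .
  have p2: "sum_list (map (tv s z a (x t) (w t)) (map (\<lambda>(c,e,ys',ex). (c,e,(i,n,ys')#ex)) (dys s z \<omega> ys)))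
      = ?R ^ n * ypv s z a (x t) (w t) (dys s z \<omega> ys)"
    unfolding part2_eq ypv_def ..
  have p1: "sum_list (map (tv s z a (x t) (w t)) (concat (map (\<lambda>m. concat (map (\<lambda>c. map (\<lambda>(c',e,ys1,ex). (- real n * c', e, (i,n+2,(m,c)#ys1@ys) # ex))
          (dY s z \<omega> (m,c))) (comps s m))) [i..<s+z+1])))
      = - real n * ?R ^ (n+2) * ?P * ?S"
  proof -
    have "sum_list (map (tv s z a (x t) (w t)) (concat (map (\<lambda>m. concat (map (\<lambda>c. map (\<lambda>(c',e,ys1,ex). (- real n * c', e, (i,n+2,(m,c)#ys1@ys) # ex))
          (dY s z \<omega> (m,c))) (comps s m))) [i..<s+z+1])))
      = (\<Sum>m\<in>{i..<s+z+1}. \<Sum>c\<in>set (comps s m). - real n * ?R ^ (n+2) * ?P * (yv s (x t) (w t) (m,c) * ypv s z a (x t) (w t) (dY s z \<omega> (m,c))))"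
      unfolding sum_list_map_concat part1_eq sum_list_upt_eq comps_sum ypv_def by (simp add: mult_ac)
    also have "{i..<s+z+1} = {i..s+z}" by auto
    finally show ?thesis by (simp add: sum_distrib_left)
  qed
  have eq: "of_nat n * ((- (?R^3) * ?S) * ?R ^ (n - Suc 0)) * ?P + ypv s z a (x t) (w t) (dys s z \<omega> ys) * ?R ^ n
      = pv s z a (x t) (w t) (dblk s z \<omega> (i,n,ys))"
  proof -
    have "of_nat n * (?R^3 * ?R ^ (n - Suc 0)) = of_nat n * ?R ^ (n+2)"
    proof (cases n)
      case (Suc k)
      have e: "n + 2 = 3 + (n - Suc 0)" using Suc by simp
      have "?R^3 * ?R ^ (n - Suc 0) = ?R ^ (n+2)" unfolding e power_add ..
      then show ?thesis by simp
    qed simp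
    note E = this
    have "of_nat n * ((- (?R^3) * ?S) * ?R ^ (n - Suc 0)) * ?P = - (of_nat n * (?R^3 * ?R ^ (n - Suc 0))) * ?P * ?S"
      by (simp only: mult_ac mult_minus_left mult_minus_right)
    also have "\<dots> = - real n * ?R ^ (n+2) * ?P * ?S" unfolding E by (simp only: mult_minus_left)
    finally have "of_nat n * ((- (?R^3) * ?S) * ?R ^ (n - Suc 0)) * ?P = - real n * ?R ^ (n+2) * ?P * ?S" .
    then show ?thesis unfolding pv_def dblk.simps map_append sum_list_append p1 p2 by simp
  qed
  show ?thesis using D unfolding eq by simp
qed

end




definition wfb :: "nat \<Rightarrow> blk \<Rightarrow> bool" where
  "wfb mu b = (1 \<le> fst b \<and> (\<forall>y\<in>set (snd (snd b)). 1 \<le> fst y \<and> fst y \<le> mu))"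

lemma tv_app:
  "sum_list (map (tv s z a X W) (map (\<lambda>(c,e,bs'). (c,e,bs'@bs)) L))
   = sum_list (map (tv s z a X W) L) * prod_list (map (bv s z X W) bs)"
  by (induction L) (auto simp: algebra_simps)

lemma tv_cons:
  "sum_list (map (tv s z a X W) (map (\<lambda>(c,e,bs'). (c,e,b#bs')) L))
   = bv s z X W b * sum_list (map (tv s z a X W) L)"
  by (induction L) (auto simp: algebra_simps)

lemma tv_scale:
  assumes "\<forall>l\<in>{1..s+z}. a l \<noteq> 0"
  shows "sum_list (map (tv s z a X W) (map (\<lambda>(c',e',bs'). (c*c', \<lambda>l. e l + e' l, bs')) L))
   = c * amon (s+z) a e * sum_list (map (tv s z a X W) L)"
  by (induction L) (auto simp: algebra_simps amon_add[OF assms])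

context
  fixes s z :: nat and \<omega> a :: "nat \<Rightarrow> real" and x :: "real \<Rightarrow> nat \<Rightarrow> real \<times> real"
    and w :: "real \<Rightarrow> nat \<Rightarrow> real" and t :: real
  assumes apos: "\<forall>i\<in>{1..s+z}. 0 < a i" and traj: "closed_loop_traj s z \<omega> a x w" and t: "t \<ge> 0"
begin

lemma dbs_deriv:
  "\<forall>b\<in>set bs. wfb (s+z) b \<Longrightarrow>
   ((\<lambda>\<tau>. prod_list (map (bv s z (x \<tau>) (w \<tau>)) bs)) has_real_derivative pv s z a (x t) (w t) (dbs s z \<omega> bs)) (at t within {0..})"
proof (induction bs)
  case Nil
  then show ?case by (simp add: pv_def)
next
  case (Cons b bs)
  obtain i n ys where b: "b = (i,n,ys)" by (cases b)
  have Db: "((\<lambda>\<tau>. bv s z (x \<tau>) (w \<tau>) b) has_real_derivative pv s z a (x t) (w t) (dblk s z \<omega> b)) (at t within {0..})"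
    using dblk_deriv[OF apos traj t] Cons.prems b by (auto simp: wfb_def)
  have Dbs: "((\<lambda>\<tau>. prod_list (map (bv s z (x \<tau>) (w \<tau>)) bs)) has_real_derivative pv s z a (x t) (w t) (dbs s z \<omega> bs)) (at t within {0..})"
    using Cons by auto
  from DERIV_mult[OF Db Dbs] show ?case
    unfolding dbs.simps pv_def map_append sum_list_append tv_app tv_cons by (simp add: mult_ac)
qed

lemma dtrm_deriv:
  assumes "\<forall>b\<in>set (snd (snd T)). wfb (s+z) b"
  shows "((\<lambda>\<tau>. tv s z a (x \<tau>) (w \<tau>) T) has_real_derivative pv s z a (x t) (w t) (dtrm s z \<omega> T)) (at t within {0..})"
proof -
  obtain c e bs where T: "T = (c,e,bs)" by (cases T)
  have nz: "\<forall>l\<in>{1..s+z}. a l \<noteq> 0" using apos by auto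
  have "((\<lambda>\<tau>. prod_list (map (bv s z (x \<tau>) (w \<tau>)) bs)) has_real_derivative pv s z a (x t) (w t) (dbs s z \<omega> bs)) (at t within {0..})"
    using dbs_deriv assms T by auto
  from DERIV_cmult[OF this, of "c * amon (s+z) a e"] show ?thesis
    unfolding T tv.simps dtrm.simps pv_def tv_scale[OF nz] by (simp add: mult_ac)
qed

lemma dpoly_deriv:
  "\<forall>T\<in>set P. \<forall>b\<in>set (snd (snd T)). wfb (s+z) b \<Longrightarrow>
   ((\<lambda>\<tau>. pv s z a (x \<tau>) (w \<tau>) P) has_real_derivative pv s z a (x t) (w t) (dpoly s z \<omega> P)) (at t within {0..})"
proof (induction P)
  case Nil
  then show ?case by (simp add: pv_def dpoly_def)
next
  case (Cons T P)
  have D1: "((\<lambda>\<tau>. tv s z a (x \<tau>) (w \<tau>) T) has_real_derivative pv s z a (x t) (w t) (dtrm s z \<omega> T)) (at t within {0..})"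
    using dtrm_deriv Cons.prems by auto
  have D2: "((\<lambda>\<tau>. pv s z a (x \<tau>) (w \<tau>) P) has_real_derivative pv s z a (x t) (w t) (dpoly s z \<omega> P)) (at t within {0..})"
    using Cons by auto
  from DERIV_add[OF D1 D2] show ?case
    by (simp add: pv_def dpoly_def)
qed

end




fun Binv :: "nat \<Rightarrow> blk \<Rightarrow> bool" where
  "Binv mu (i,n,ys) = (1 \<le> i \<and> i \<le> mu \<and> length ys \<le> n \<and> (\<forall>y\<in>set ys. i \<le> fst y \<and> fst y \<le> mu))"

definition Lex :: "nat \<Rightarrow> ex \<Rightarrow> nat set \<Rightarrow> bool" where
  "Lex mu e Os = (\<exists>j. 1 \<le> j \<and> j \<le> mu \<and> 1 \<le> e j \<and> (\<forall>l. 1 \<le> l \<and> l < j \<longrightarrow> 0 \<le> e l) \<and> (\<forall>i\<in>Os. j \<le> i))"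

fun Tinv :: "nat \<Rightarrow> trm \<Rightarrow> bool" where
  "Tinv mu (c,e,bs) = ((\<forall>b\<in>set bs. Binv mu b) \<and> Lex mu e (fst ` set bs))"

definition DPm :: "nat \<Rightarrow> nat \<Rightarrow> ex \<Rightarrow> nat set \<Rightarrow> nat set \<Rightarrow> bool" where
  "DPm mu i \<delta> Ns Os = (\<exists>m\<ge>i. (\<forall>l\<le>m. 0 \<le> \<delta> l) \<and> (Ns \<subseteq> Os \<or> (\<exists>j'. 1 \<le> j' \<and> j' \<le> mu \<and> Ns \<subseteq> insert j' Os \<and>
      (j' \<le> m \<longrightarrow> 1 \<le> \<delta> j' \<and> (\<forall>l<j'. \<delta> l = 0)))))"

lemma DPm_mono: "DPm mu i \<delta> Ns Os \<Longrightarrow> i' \<le> i \<Longrightarrow> Ns' \<subseteq> Ns \<union> Os' \<Longrightarrow> Os \<subseteq> Os' \<Longrightarrow> DPm mu i' \<delta> Ns' Os'"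
proof -
  assume D: "DPm mu i \<delta> Ns Os" and ii: "i' \<le> i" and NN: "Ns' \<subseteq> Ns \<union> Os'" and OO: "Os \<subseteq> Os'"
  obtain m where m: "m \<ge> i" "\<forall>l\<le>m. 0 \<le> \<delta> l"
    and N: "Ns \<subseteq> Os \<or> (\<exists>j'. 1 \<le> j' \<and> j' \<le> mu \<and> Ns \<subseteq> insert j' Os \<and> (j' \<le> m \<longrightarrow> 1 \<le> \<delta> j' \<and> (\<forall>l<j'. \<delta> l = 0)))"
    using D unfolding DPm_def by blast
  from N have "Ns' \<subseteq> Os' \<or> (\<exists>j'. 1 \<le> j' \<and> j' \<le> mu \<and> Ns' \<subseteq> insert j' Os' \<and> (j' \<le> m \<longrightarrow> 1 \<le> \<delta> j' \<and> (\<forall>l<j'. \<delta> l = 0)))"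
  proof
    assume "Ns \<subseteq> Os" then show ?thesis using NN OO by blast
  next
    assume "\<exists>j'. 1 \<le> j' \<and> j' \<le> mu \<and> Ns \<subseteq> insert j' Os \<and> (j' \<le> m \<longrightarrow> 1 \<le> \<delta> j' \<and> (\<forall>l<j'. \<delta> l = 0))"
    then obtain j' where "1 \<le> j'" "j' \<le> mu" "Ns \<subseteq> insert j' Os" "j' \<le> m \<longrightarrow> 1 \<le> \<delta> j' \<and> (\<forall>l<j'. \<delta> l = 0)" by blast
    moreover have "Ns' \<subseteq> insert j' Os'" using calculation(3) NN OO by blast
    ultimately show ?thesis by blast
  qed
  then show ?thesis unfolding DPm_def using m ii by (intro exI[of _ m]) auto
qed

lemma Lex_step: "Lex mu e Os \<Longrightarrow> i \<in> Os \<Longrightarrow> DPm mu i \<delta> Ns Os \<Longrightarrow> Lex mu (\<lambda>l. e l + \<delta> l) Ns"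
proof -
  assume L: "Lex mu e Os" and i: "i \<in> Os" and D: "DPm mu i \<delta> Ns Os"
  obtain j where j: "1 \<le> j" "j \<le> mu" "1 \<le> e j" "\<forall>l. 1 \<le> l \<and> l < j \<longrightarrow> 0 \<le> e l" "\<forall>i\<in>Os. j \<le> i"
    using L unfolding Lex_def by blast
  obtain m where m: "m \<ge> i" "\<forall>l\<le>m. 0 \<le> \<delta> l"
    and N: "Ns \<subseteq> Os \<or> (\<exists>j'. 1 \<le> j' \<and> j' \<le> mu \<and> Ns \<subseteq> insert j' Os \<and> (j' \<le> m \<longrightarrow> 1 \<le> \<delta> j' \<and> (\<forall>l<j'. \<delta> l = 0)))"
    using D unfolding DPm_def by blast
  have jm: "j \<le> m" using j(5) i m(1) by fastforce
  have keep: "1 \<le> e j + \<delta> j \<and> (\<forall>l. 1 \<le> l \<and> l < j \<longrightarrow> 0 \<le> e l + \<delta> l)"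
  proof
    show "1 \<le> e j + \<delta> j" using j(3) m(2) jm by (smt (verit))
    show "\<forall>l. 1 \<le> l \<and> l < j \<longrightarrow> 0 \<le> e l + \<delta> l"
    proof (intro allI impI)
      fix l assume "1 \<le> l \<and> l < j"
      then have "0 \<le> e l" "0 \<le> \<delta> l" using j(4) m(2) jm by auto
      then show "0 \<le> e l + \<delta> l" by simp
    qed
  qed
  show ?thesis
  proof (cases "Ns \<subseteq> Os")
    case True
    then have "\<forall>i\<in>Ns. j \<le> i" using j(5) by blast
    then show ?thesis unfolding Lex_def using j(1,2) keep by blast
  next
    case False
    then obtain j' where j': "1 \<le> j'" "j' \<le> mu" "Ns \<subseteq> insert j' Os" "j' \<le> m \<longrightarrow> 1 \<le> \<delta> j' \<and> (\<forall>l<j'. \<delta> l = 0)"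
      using N by blast
    show ?thesis
    proof (cases "j \<le> j'")
      case True
      then have "\<forall>i\<in>Ns. j \<le> i" using j(5) j'(3) by blast
      then show ?thesis unfolding Lex_def using j(1,2) keep by blast
    next
      case False
      then have "j' \<le> m" using jm by auto
      then have d: "1 \<le> \<delta> j'" "\<forall>l<j'. \<delta> l = 0" using j' by auto
      have "0 \<le> e j'" using j(4) j'(1) False by auto
      then have A: "1 \<le> e j' + \<delta> j'" using d by simp
      have B: "\<forall>l. 1 \<le> l \<and> l < j' \<longrightarrow> 0 \<le> e l + \<delta> l" using d j(4) False by auto
      have C: "\<forall>i\<in>Ns. j' \<le> i" using j(5) j'(3) False by fastforce
      show ?thesis unfolding Lex_def using j'(1,2) A B C by blast
    qed
  qed
qed




lemma dY_cases:
  assumes "(c',\<delta>,ys1,ex) \<in> set (dY s z \<omega> (m,c))"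
  shows "(\<delta> = (\<lambda>_. 0) \<and> ex = [] \<and> (\<exists>c0. ys1 = [(m,c0)])) \<or>
         (\<exists>k\<in>{m+1..s+z}. \<delta> = (\<lambda>l. - ind (m+1) (k-1) l) \<and> ys1 = [(k,True)] \<and> ex = []) \<or>
         (\<exists>j\<in>{1..s+z}. \<delta> = (\<lambda>l. ind j (s+z) l - ind (m+1) (s+z) l) \<and> ys1 = [] \<and> ex = [(j,1,[(j,True)])])"
  using assms by (auto simp: dY_def split: if_splits)

lemma dY_prop:
  assumes m: "1 \<le> m" "m \<le> s+z" and mem: "(c',\<delta>,ys1,ex) \<in> set (dY s z \<omega> (m,c))"
  shows "length ys1 \<le> 1 \<and> (\<forall>y\<in>set ys1. m \<le> fst y \<and> fst y \<le> s+z) \<and> (\<forall>b\<in>set ex. Binv (s+z) b)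
     \<and> DPm (s+z) m \<delta> (fst ` set ex) {}"
  using dY_cases[OF mem]
proof (elim disjE exE conjE bexE)
  fix c0 assume "\<delta> = (\<lambda>_. 0)" "ex = []" "ys1 = [(m,c0)]"
  then show ?thesis using m unfolding DPm_def by auto
next
  fix k assume k: "k \<in> {m+1..s+z}" "\<delta> = (\<lambda>l. - ind (m+1) (k-1) l)" "ys1 = [(k,True)]" "ex = []"
  then show ?thesis using m unfolding DPm_def by (auto simp: ind_def)
next
  fix j assume j: "j \<in> {1..s+z}" "\<delta> = (\<lambda>l. ind j (s+z) l - ind (m+1) (s+z) l)" "ys1 = []" "ex = [(j,1,[(j,True)])]"
  have "DPm (s+z) m \<delta> (fst ` set ex) {}"
    unfolding DPm_def
  proof (intro exI[of _ m] conjI)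
    show "\<forall>l\<le>m. 0 \<le> \<delta> l" using j by (auto simp: ind_def)
    show "fst ` set ex \<subseteq> {} \<or> (\<exists>j'. 1 \<le> j' \<and> j' \<le> s+z \<and> fst ` set ex \<subseteq> insert j' {} \<and>
      (j' \<le> m \<longrightarrow> 1 \<le> \<delta> j' \<and> (\<forall>l<j'. \<delta> l = 0)))"
      using j by (intro disjI2 exI[of _ j]) (auto simp: ind_def)
  qed simp
  then show ?thesis using j by auto
qed

lemma dys_prop:
  assumes "\<forall>y\<in>set ys. i \<le> fst y \<and> fst y \<le> s+z" "1 \<le> i" "(c,\<delta>,ys',ex) \<in> set (dys s z \<omega> ys)"
  shows "length ys' \<le> length ys \<and> (\<forall>y\<in>set ys'. i \<le> fst y \<and> fst y \<le> s+z) \<and> (\<forall>b\<in>set ex. Binv (s+z) b)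
     \<and> DPm (s+z) i \<delta> (fst ` set ex) {}"
  using assms
proof (induction ys arbitrary: c \<delta> ys' ex)
  case Nil
  then show ?case by simp
next
  case (Cons y ys)
  obtain m c0 where y: "y = (m,c0)" by (cases y)
  from Cons.prems(3) consider
    (A) ys1 where "(c,\<delta>,ys1,ex) \<in> set (dY s z \<omega> y)" "ys' = ys1 @ ys"
  | (B) ys'' where "(c,\<delta>,ys'',ex) \<in> set (dys s z \<omega> ys)" "ys' = y # ys''"
    by auto
  then show ?case
  proof cases
    case (A ys1)
    have m: "i \<le> m" "m \<le> s+z" using Cons.prems(1) y by auto
    then have "1 \<le> m" using Cons.prems(2) by auto
    from dY_prop[OF this m(2) A(1)[unfolded y]] have P: "length ys1 \<le> 1 \<and> (\<forall>y\<in>set ys1. m \<le> fst y \<and> fst y \<le> s+z) \<and> (\<forall>b\<in>set ex. Binv (s+z) b)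
      \<and> DPm (s+z) m \<delta> (fst ` set ex) {}" .
    have "DPm (s+z) i \<delta> (fst ` set ex) {}" using P m by (auto elim: DPm_mono)
    then show ?thesis using P A(2) Cons.prems(1) m by fastforce
  next
    case (B ys'')
    have "length ys'' \<le> length ys \<and> (\<forall>y\<in>set ys''. i \<le> fst y \<and> fst y \<le> s+z) \<and> (\<forall>b\<in>set ex. Binv (s+z) b)
     \<and> DPm (s+z) i \<delta> (fst ` set ex) {}" using Cons.IH[OF _ Cons.prems(2) B(1)] Cons.prems(1) by auto
    then show ?thesis using B(2) Cons.prems(1) by auto
  qed
qed

lemma dblk_prop:
  assumes B: "Binv (s+z) (i,n,ys)" and mem: "(c,\<delta>,bs') \<in> set (dblk s z \<omega> (i,n,ys))"
  shows "(\<forall>b\<in>set bs'. Binv (s+z) b) \<and> DPm (s+z) i \<delta> (fst ` set bs') {i}"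
proof -
  have i: "1 \<le> i" "i \<le> s+z" "length ys \<le> n" "\<forall>y\<in>set ys. i \<le> fst y \<and> fst y \<le> s+z" using B by auto
  from mem consider
    (A) m c0 c' ys1 ex where "m \<in> {i..s+z}" "(c',\<delta>,ys1,ex) \<in> set (dY s z \<omega> (m,c0))" "bs' = (i,n+2,(m,c0)#ys1@ys) # ex"
  | (Bq) ys' ex where "(c,\<delta>,ys',ex) \<in> set (dys s z \<omega> ys)" "bs' = (i,n,ys') # ex"
    by (auto simp del: upt_Suc)
  then show ?thesis
  proof cases
    case (A m c0 c' ys1 ex)
    have m1: "1 \<le> m" "m \<le> s+z" using A(1) i by auto
    from dY_prop[OF m1 A(2)] have P: "length ys1 \<le> 1 \<and> (\<forall>y\<in>set ys1. m \<le> fst y \<and> fst y \<le> s+z) \<and> (\<forall>b\<in>set ex. Binv (s+z) b)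
      \<and> DPm (s+z) m \<delta> (fst ` set ex) {}" .
    have "DPm (s+z) i \<delta> (fst ` set bs') {i}"
      using P A(1,3) by (auto elim!: DPm_mono)
    moreover have "Binv (s+z) (i,n+2,(m,c0)#ys1@ys)" using P i A(1) by fastforce
    ultimately show ?thesis using P A(3) by auto
  next
    case (Bq ys' ex)
    from dys_prop[OF i(4) i(1) Bq(1)] have P: "length ys' \<le> length ys \<and> (\<forall>y\<in>set ys'. i \<le> fst y \<and> fst y \<le> s+z) \<and> (\<forall>b\<in>set ex. Binv (s+z) b)
     \<and> DPm (s+z) i \<delta> (fst ` set ex) {}" .
    have "DPm (s+z) i \<delta> (fst ` set bs') {i}"
      using P Bq(2) by (auto elim!: DPm_mono)
    moreover have "Binv (s+z) (i,n,ys')" using P i by auto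
    ultimately show ?thesis using P Bq(2) by auto
  qed
qed




lemma dbs_prop:
  assumes "\<forall>b\<in>set bs. Binv (s+z) b" "(c,\<delta>,bs') \<in> set (dbs s z \<omega> bs)"
  shows "(\<forall>b\<in>set bs'. Binv (s+z) b) \<and> (\<exists>i\<in>fst ` set bs. DPm (s+z) i \<delta> (fst ` set bs') (fst ` set bs))"
  using assms
proof (induction bs arbitrary: c \<delta> bs')
  case Nil
  then show ?case by simp
next
  case (Cons b bs)
  obtain i n ys where b: "b = (i,n,ys)" by (cases b)
  from Cons.prems(2) consider
    (A) bs'' where "(c,\<delta>,bs'') \<in> set (dblk s z \<omega> b)" "bs' = bs'' @ bs"
  | (B) bs'' where "(c,\<delta>,bs'') \<in> set (dbs s z \<omega> bs)" "bs' = b # bs''"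
    by (auto simp del: dblk.simps)
  then show ?case
  proof cases
    case (A bs'')
    have "Binv (s+z) (i,n,ys)" using Cons.prems(1) b by auto
    from dblk_prop[OF this A(1)[unfolded b]]
    have P: "(\<forall>b\<in>set bs''. Binv (s+z) b) \<and> DPm (s+z) i \<delta> (fst ` set bs'') {i}" .
    have "DPm (s+z) i \<delta> (fst ` set bs') (fst ` set (b#bs))"
      using P A(2) b by (auto elim!: DPm_mono)
    then show ?thesis using P A(2) Cons.prems(1) b by auto
  next
    case (B bs'')
    from Cons.IH[OF _ B(1)] Cons.prems(1)
    obtain i' where P: "\<forall>b\<in>set bs''. Binv (s+z) b" "i' \<in> fst ` set bs" "DPm (s+z) i' \<delta> (fst ` set bs'') (fst ` set bs)"
      by auto
    have "DPm (s+z) i' \<delta> (fst ` set bs') (fst ` set (b#bs))"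
      using P(3) B(2) by (auto elim!: DPm_mono)
    then show ?thesis using P B(2) Cons.prems(1) by auto
  qed
qed

lemma dtrm_prop:
  assumes "Tinv (s+z) T" "T' \<in> set (dtrm s z \<omega> T)"
  shows "Tinv (s+z) T'"
proof -
  obtain c e bs where T: "T = (c,e,bs)" by (cases T)
  from assms(2) T obtain c' e' bs' where m: "(c',e',bs') \<in> set (dbs s z \<omega> bs)"
    and T': "T' = (c*c', \<lambda>l. e l + e' l, bs')" by auto
  have I: "\<forall>b\<in>set bs. Binv (s+z) b" "Lex (s+z) e (fst ` set bs)" using assms(1) T by auto
  from dbs_prop[OF I(1) m] obtain i where P: "\<forall>b\<in>set bs'. Binv (s+z) b" "i \<in> fst ` set bs"
    "DPm (s+z) i e' (fst ` set bs') (fst ` set bs)" by blast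
  have "Lex (s+z) (\<lambda>l. e l + e' l) (fst ` set bs')" by (rule Lex_step[OF I(2) P(2,3)])
  then show ?thesis using P(1) T' by simp
qed

lemma dpoly_prop: "\<forall>T\<in>set P. Tinv (s+z) T \<Longrightarrow> \<forall>T\<in>set (dpoly s z \<omega> P). Tinv (s+z) T"
proof
  fix T assume "\<forall>T\<in>set P. Tinv (s+z) T" "T \<in> set (dpoly s z \<omega> P)"
  moreover from this(2) obtain T0 where "T0 \<in> set P" "T \<in> set (dtrm s z \<omega> T0)"
    unfolding dpoly_def by (auto simp del: dtrm.simps)
  ultimately show "Tinv (s+z) T" using dtrm_prop by blast
qed

lemma Kp_prop: "\<forall>T\<in>set (Kp s z). Tinv (s+z) T"
proof
  fix T assume "T \<in> set (Kp s z)"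
  then obtain j where j: "j \<in> {1..s+z}" "T = (-1, ind j (s+z), [(j,1,[(j,True)])])"
    unfolding Kp_def by auto
  have "Lex (s+z) (ind j (s+z)) {j}"
    unfolding Lex_def using j(1) by (intro exI[of _ j]) (auto simp: ind_def)
  then show "Tinv (s+z) T" using j by simp
qed

lemma G_prop: "\<forall>T\<in>set (G s z \<omega> k). Tinv (s+z) T"
proof (induction k)
  case 0 then show ?case using Kp_prop by (simp add: G_def)
next
  case (Suc k) then show ?case using dpoly_prop by (simp add: G_def)
qed

lemma Binv_wfb: "Binv mu b \<Longrightarrow> wfb mu b"
  by (cases b) (auto simp: wfb_def)



lemma S_nonneg: "0 \<le> (\<Sum>m=i..s+z. ynormsq s X W m)"
  by (intro sum_nonneg) (auto simp: ynormsq_def)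

lemma Rv_pos: "0 < Rv s z X W i" and Rv_le1: "Rv s z X W i \<le> 1"
  using S_nonneg[where i=i and s=s and z=z and X=X and W=W] by (auto simp: Rv_def)

lemma yv_R_bound:
  assumes "i \<le> m" "m \<le> s+z"
  shows "\<bar>yv s X W (m,c)\<bar> * Rv s z X W i \<le> 1"
proof -
  let ?S = "\<Sum>m=i..s+z. ynormsq s X W m"
  have "(yv s X W (m,c))^2 \<le> ynormsq s X W m"
  proof (cases "m \<le> s")
    case True
    then show ?thesis unfolding ynormsq_eq by (cases c) (auto simp: comps_def)
  next
    case False
    then show ?thesis by (simp add: ynormsq_def yv_def)
  qed
  also have "\<dots> \<le> ?S"
    using assms by (intro member_le_sum) (auto simp: ynormsq_def)
  finally have "(yv s X W (m,c))^2 \<le> 1 + ?S" by simp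
  then have "\<bar>yv s X W (m,c)\<bar>^2 \<le> 1 + ?S" by simp
  then have "\<bar>yv s X W (m,c)\<bar> \<le> sqrt (1 + ?S)" by (rule real_le_rsqrt)
  moreover have "sqrt (1 + ?S) > 0" using S_nonneg[where i=i and s=s and z=z and X=X and W=W] by simp
  ultimately show ?thesis unfolding Rv_def by (simp add: divide_simps)
qed

lemma prod_ys_bound:
  assumes "\<forall>y\<in>set ys. i \<le> fst y \<and> fst y \<le> s+z"
  shows "\<bar>prod_list (map (yv s X W) ys)\<bar> * Rv s z X W i ^ length ys \<le> 1"
  using assms
proof (induction ys)
  case Nil then show ?case by simp
next
  case (Cons y ys)
  obtain m c where y: "y = (m,c)" by (cases y)
  have A: "\<bar>yv s X W (m,c)\<bar> * Rv s z X W i \<le> 1" using Cons.prems y yv_R_bound by auto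
  have B: "\<bar>prod_list (map (yv s X W) ys)\<bar> * Rv s z X W i ^ length ys \<le> 1" using Cons by auto
  have "\<bar>prod_list (map (yv s X W) (y#ys))\<bar> * Rv s z X W i ^ length (y#ys)
     = (\<bar>yv s X W (m,c)\<bar> * Rv s z X W i) * (\<bar>prod_list (map (yv s X W) ys)\<bar> * Rv s z X W i ^ length ys)"
    using y by (simp add: abs_mult mult_ac)
  also have "\<dots> \<le> 1 * 1"
    using A B Rv_pos[of s z X W i] by (intro mult_mono) auto
  finally show ?case by simp
qed

lemma bv_bound: "Binv (s+z) b \<Longrightarrow> \<bar>bv s z X W b\<bar> \<le> 1"
proof -
  assume B: "Binv (s+z) b"
  obtain i n ys where b: "b = (i,n,ys)" by (cases b)
  have ys: "\<forall>y\<in>set ys. i \<le> fst y \<and> fst y \<le> s+z" "length ys \<le> n" using B b by auto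
  let ?R = "Rv s z X W i" let ?P = "prod_list (map (yv s X W) ys)"
  have R: "0 < ?R" "?R \<le> 1" using Rv_pos Rv_le1 by auto
  have "?R ^ n \<le> ?R ^ length ys" using R ys(2) by (intro power_decreasing) auto
  then have "\<bar>?P\<bar> * ?R ^ n \<le> \<bar>?P\<bar> * ?R ^ length ys" by (simp add: mult_left_mono)
  also have "\<dots> \<le> 1" by (rule prod_ys_bound[OF ys(1)])
  finally show ?thesis using b R by (simp add: abs_mult mult.commute)
qed

lemma prod_bv_bound: "\<forall>b\<in>set bs. Binv (s+z) b \<Longrightarrow> \<bar>prod_list (map (bv s z X W) bs)\<bar> \<le> 1"
proof (induction bs)
  case Nil then show ?case by simp
next
  case (Cons b bs)
  then have "\<bar>bv s z X W b\<bar> \<le> 1" "\<bar>prod_list (map (bv s z X W) bs)\<bar> \<le> 1" using bv_bound by auto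
  then have "\<bar>bv s z X W b\<bar> * \<bar>prod_list (map (bv s z X W) bs)\<bar> \<le> 1"
    by (intro mult_le_one) auto
  then show ?case by (simp add: abs_mult)
qed

lemma amon_pos: "\<forall>l\<in>{1..mu}. 0 < a l \<Longrightarrow> 0 < amon mu a e"
  unfolding amon_def by (intro prod_pos) auto

lemma amon_bound:
  assumes a: "\<forall>l\<in>{1..mu}. 0 < a l \<and> a l \<le> 1" and j: "1 \<le> j" "j \<le> mu" "1 \<le> e j"
    and lo: "\<forall>l. 1 \<le> l \<and> l < j \<longrightarrow> 0 \<le> e l"
  shows "amon mu a e \<le> a j * (\<Prod>l\<in>{j+1..mu}. a l powi e l)"
proof -
  have U: "{1..mu} = {1..<j} \<union> ({j} \<union> {j+1..mu})" using j by auto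
  have "amon mu a e = (\<Prod>l\<in>{1..<j}. a l powi e l) * (a j powi e j * (\<Prod>l\<in>{j+1..mu}. a l powi e l))"
  proof -
    have "(\<Prod>l\<in>{1..<j} \<union> ({j} \<union> {j+1..mu}). a l powi e l) = (\<Prod>l\<in>{1..<j}. a l powi e l) * (\<Prod>l\<in>{j} \<union> {j+1..mu}. a l powi e l)"
      by (rule prod.union_disjoint) auto
    also have "(\<Prod>l\<in>{j} \<union> {j+1..mu}. a l powi e l) = (\<Prod>l\<in>{j}. a l powi e l) * (\<Prod>l\<in>{j+1..mu}. a l powi e l)"
      by (rule prod.union_disjoint) auto
    finally show ?thesis unfolding amon_def U by simp
  qed
  also have "\<dots> \<le> 1 * (a j * (\<Prod>l\<in>{j+1..mu}. a l powi e l))"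
  proof (rule mult_mono)
    show "(\<Prod>l\<in>{1..<j}. a l powi e l) \<le> 1"
    proof (intro prod_le_1 conjI)
      fix l assume l: "l \<in> {1..<j}"
      then have al: "0 < a l" "a l \<le> 1" "0 \<le> e l" using a lo j by auto
      show "0 \<le> a l powi e l" using al by simp
      show "a l powi e l \<le> 1" using al by (intro power_int_le_one) auto
    qed
    have aj: "0 < a j" "a j \<le> 1" using a j by auto
    have "a j powi e j \<le> a j powi 1"
      using aj j by (intro power_int_decreasing) auto
    moreover have "0 \<le> (\<Prod>l\<in>{j+1..mu}. a l powi e l)" using a by (intro prod_nonneg zero_le_power_int) (auto simp: less_imp_le)
    ultimately show "a j powi e j * (\<Prod>l\<in>{j+1..mu}. a l powi e l) \<le> a j * (\<Prod>l\<in>{j+1..mu}. a l powi e l)"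
      by (simp add: mult_right_mono)
    show "0 \<le> a j powi e j * (\<Prod>l\<in>{j+1..mu}. a l powi e l)" using a j by (intro mult_nonneg_nonneg prod_nonneg zero_le_power_int) (auto simp: less_imp_le)
    show "0 \<le> (1::real)" by simp
  qed
  finally show ?thesis by simp
qed




definition CC :: "nat \<Rightarrow> trm list \<Rightarrow> nat \<Rightarrow> (nat \<Rightarrow> real) \<Rightarrow> real" where
  "CC mu P j v = sum_list (map (\<lambda>T. \<bar>fst T\<bar> * (\<Prod>l\<in>{j+1..mu}. v l powi (fst (snd T)) l)) P)"

lemma CC_Cons: "CC mu (T#P) j v = \<bar>fst T\<bar> * (\<Prod>l\<in>{j+1..mu}. v l powi (fst (snd T)) l) + CC mu P j v"
  by (simp add: CC_def)

lemma CC_nonneg: "\<forall>l\<in>{j+1..mu}. 0 < v l \<Longrightarrow> 0 \<le> CC mu P j v"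
  unfolding CC_def by (induction P) (auto intro!: add_nonneg_nonneg mult_nonneg_nonneg prod_nonneg simp: less_imp_le)

lemma CC_restr: "CC mu P j (restr j mu a) = CC mu P j a"
  unfolding CC_def restr_def by (intro arg_cong[where f=sum_list] map_cong refl arg_cong2[where f="(*)"] prod.cong) auto

lemma CC_cont:
  assumes "\<forall>v\<in>S. \<forall>l\<in>{j+1..mu}. v l \<noteq> 0"
  shows "continuous_on S (CC mu P j)"
proof -
  have "continuous_on S (\<lambda>v. CC mu P j v)"
  proof (induction P)
    case Nil then show ?case by (simp add: CC_def)
  next
    case (Cons T P)
    have P1: "continuous_on S (\<lambda>v. v l powi (fst (snd T)) l)" if "l \<in> {j+1..mu}" for l
      by (rule continuous_on_power_int)
         (use assms that in \<open>auto intro: continuous_on_product_then_coordinatewise[OF continuous_on_id]\<close>)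
    have "continuous_on S (\<lambda>v. \<Prod>l\<in>{j+1..mu}. v l powi (fst (snd T)) l)"
      by (rule continuous_on_prod) (use P1 in auto)
    then have "continuous_on S (\<lambda>v. \<bar>fst T\<bar> * (\<Prod>l\<in>{j+1..mu}. v l powi (fst (snd T)) l))"
      by (intro continuous_on_mult continuous_on_const)
    then show ?case unfolding CC_Cons using Cons by (intro continuous_on_add)
  qed
  then show ?thesis by simp
qed

lemma tv_bound:
  assumes a: "\<forall>l\<in>{1..s+z}. 0 < a l \<and> a l \<le> 1" and T: "Tinv (s+z) T"
  shows "\<bar>tv s z a X W T\<bar> \<le> (\<Sum>j=1..s+z. a j * (\<bar>fst T\<bar> * (\<Prod>l\<in>{j+1..s+z}. a l powi (fst (snd T)) l)))"
proof -
  obtain c e bs where Te: "T = (c,e,bs)" by (cases T)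
  have B: "\<forall>b\<in>set bs. Binv (s+z) b" and L: "Lex (s+z) e (fst ` set bs)" using T Te by auto
  obtain j where j: "1 \<le> j" "j \<le> s+z" "1 \<le> e j" "\<forall>l. 1 \<le> l \<and> l < j \<longrightarrow> 0 \<le> e l"
    using L unfolding Lex_def by blast
  have ap: "\<forall>l\<in>{1..s+z}. 0 < a l" using a by auto
  have "\<bar>tv s z a X W T\<bar> = \<bar>c\<bar> * amon (s+z) a e * \<bar>prod_list (map (bv s z X W) bs)\<bar>"
    using Te amon_pos[OF ap, of e] by (simp add: abs_mult)
  also have "\<dots> \<le> \<bar>c\<bar> * amon (s+z) a e * 1"
    using prod_bv_bound[OF B] amon_pos[OF ap, of e] by (intro mult_left_mono) auto
  also have "\<dots> \<le> \<bar>c\<bar> * (a j * (\<Prod>l\<in>{j+1..s+z}. a l powi e l))"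
    using amon_bound[OF a j] by (simp add: mult_left_mono)
  also have "\<dots> = a j * (\<bar>fst T\<bar> * (\<Prod>l\<in>{j+1..s+z}. a l powi (fst (snd T)) l))"
    using Te by simp
  also have "\<dots> \<le> (\<Sum>j=1..s+z. a j * (\<bar>fst T\<bar> * (\<Prod>l\<in>{j+1..s+z}. a l powi (fst (snd T)) l)))"
    by (rule member_le_sum) (use j a in \<open>auto intro!: mult_nonneg_nonneg prod_nonneg zero_le_power_int simp: less_imp_le\<close>)
  finally show ?thesis .
qed

lemma pv_bound:
  assumes a: "\<forall>l\<in>{1..s+z}. 0 < a l \<and> a l \<le> 1"
  shows "\<forall>T\<in>set P. Tinv (s+z) T \<Longrightarrow> \<bar>pv s z a X W P\<bar> \<le> (\<Sum>j=1..s+z. a j * CC (s+z) P j a)"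
proof (induction P)
  case Nil then show ?case by (simp add: pv_def CC_def)
next
  case (Cons T P)
  have "\<bar>pv s z a X W (T#P)\<bar> \<le> \<bar>tv s z a X W T\<bar> + \<bar>pv s z a X W P\<bar>"
    by (simp add: pv_def abs_triangle_ineq)
  also have "\<dots> \<le> (\<Sum>j=1..s+z. a j * (\<bar>fst T\<bar> * (\<Prod>l\<in>{j+1..s+z}. a l powi (fst (snd T)) l))) + (\<Sum>j=1..s+z. a j * CC (s+z) P j a)"
    using tv_bound[OF a] Cons by (intro add_mono) auto
  also have "\<dots> = (\<Sum>j=1..s+z. a j * CC (s+z) (T#P) j a)"
    unfolding CC_Cons sum.distrib[symmetric] by (simp add: distrib_left)
  finally show ?case .
qed




theorem proposition2:
  fixes s z p :: nat and \<omega> :: "nat \<Rightarrow> real"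
  assumes "s + z \<ge> 1"
    and "\<forall>i\<in>{1..s}. \<omega> i > 0"
  shows "\<exists>c_mu :: real. \<exists>c :: nat \<Rightarrow> (nat \<Rightarrow> real) \<Rightarrow> real.
     c_mu > 0 \<and>
     (\<forall>i\<in>{1..s+z-1}. continuous_on (posbox i (s+z)) (c i) \<and>
                        (\<forall>v\<in>posbox i (s+z). c i v > 0)) \<and>
     (\<forall>a :: nat \<Rightarrow> real. (\<forall>i\<in>{1..s+z}. 0 < a i \<and> a i \<le> 1) \<longrightarrow>
       (\<forall>x w. closed_loop_traj s z \<omega> a x w \<longrightarrow>
          (\<exists>D :: nat \<Rightarrow> real \<Rightarrow> real.
             (\<forall>t\<ge>0. D 0 t = kappa s z a (x t) (w t)) \<and>
             (\<forall>k<p. \<forall>t\<ge>0. (D k has_real_derivative D (Suc k) t) (at t within {0..})) \<and>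
             (\<forall>k\<le>p. \<forall>t\<ge>0. \<bar>D k t\<bar> \<le>
                 a (s+z) * c_mu + (\<Sum>i=1..s+z-1. a i * c i (restr i (s+z) a))))))"
proof -
  define C where "C = (\<lambda>i v. 1 + (\<Sum>k\<in>{..p}. CC (s+z) (G s z \<omega> k) i v))"
  have Cmu: "C (s+z) v = C (s+z) (\<lambda>_. 0)" for v by (simp add: C_def CC_def)
  have Cge: "1 \<le> C i v" if "\<forall>l\<in>{i+1..s+z}. 0 < v l" for i v
    unfolding C_def using CC_nonneg[OF that] by (simp add: sum_nonneg)
  have CCle: "CC (s+z) (G s z \<omega> k) i v \<le> C i v" if "\<forall>l\<in>{i+1..s+z}. 0 < v l" "k \<le> p" for i v k
  proof -
    have "CC (s+z) (G s z \<omega> k) i v \<le> (\<Sum>k\<in>{..p}. CC (s+z) (G s z \<omega> k) i v)"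
      by (rule member_le_sum) (use that CC_nonneg in auto)
    then show ?thesis unfolding C_def by simp
  qed
  show ?thesis
  proof (intro exI[of _ "C (s+z) (\<lambda>_. 0)"] exI[of _ C] conjI ballI allI impI)
    show "0 < C (s+z) (\<lambda>_. 0)" using Cge[of "s+z" "\<lambda>_. 0"] by simp
  next
    fix i assume i: "i \<in> {1..s+z-1}"
    have nz: "\<forall>v\<in>posbox i (s+z). \<forall>l\<in>{i+1..s+z}. v l \<noteq> 0"
    proof (intro ballI)
      fix v l assume v: "v \<in> posbox i (s+z)" and l: "l \<in> {i+1..s+z}"
      then have "i < l \<and> l \<le> s+z" by auto
      then have "0 < v l" using v unfolding posbox_def by blast
      then show "v l \<noteq> 0" by simp
    qed
    show "continuous_on (posbox i (s+z)) (C i)"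
      unfolding C_def by (intro continuous_intros CC_cont[OF nz])
  next
    fix i v assume "i \<in> {1..s+z-1}" "v \<in> posbox i (s+z)"
    then have "\<forall>l\<in>{i+1..s+z}. 0 < v l" unfolding posbox_def by auto
    then show "0 < C i v" using Cge by fastforce
  next
    fix a :: "nat \<Rightarrow> real" and x w
    assume a: "\<forall>i\<in>{1..s+z}. 0 < a i \<and> a i \<le> 1" and traj: "closed_loop_traj s z \<omega> a x w"
    have apos: "\<forall>i\<in>{1..s+z}. 0 < a i" using a by auto
    have GS: "G s z \<omega> (Suc k) = dpoly s z \<omega> (G s z \<omega> k)" for k by (simp add: G_def)
    show "\<exists>D :: nat \<Rightarrow> real \<Rightarrow> real.
             (\<forall>t\<ge>0. D 0 t = kappa s z a (x t) (w t)) \<and>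
             (\<forall>k<p. \<forall>t\<ge>0. (D k has_real_derivative D (Suc k) t) (at t within {0..})) \<and>
             (\<forall>k\<le>p. \<forall>t\<ge>0. \<bar>D k t\<bar> \<le>
                 a (s+z) * C (s+z) (\<lambda>_. 0) + (\<Sum>i=1..s+z-1. a i * C i (restr i (s+z) a)))"
    proof (intro exI[of _ "\<lambda>k t. pv s z a (x t) (w t) (G s z \<omega> k)"] conjI allI impI)
      fix t :: real assume "0 \<le> t"
      show "pv s z a (x t) (w t) (G s z \<omega> 0) = kappa s z a (x t) (w t)"
        by (simp add: G_def kappa_eq)
    next
      fix k :: nat and t :: real assume k: "k < p" and t: "0 \<le> t"
      have W: "\<forall>T\<in>set (G s z \<omega> k). \<forall>b\<in>set (snd (snd T)). wfb (s+z) b"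
      proof (intro ballI)
        fix T b assume T: "T \<in> set (G s z \<omega> k)" and b: "b \<in> set (snd (snd T))"
        obtain c e bs where Te: "T = (c,e,bs)" by (cases T)
        have "Tinv (s+z) T" using G_prop T by blast
        then have "\<forall>b\<in>set bs. Binv (s+z) b" using Te by simp
        then show "wfb (s+z) b" using b Te Binv_wfb by auto
      qed
      show "((\<lambda>t. pv s z a (x t) (w t) (G s z \<omega> k)) has_real_derivative pv s z a (x t) (w t) (G s z \<omega> (Suc k))) (at t within {0..})"
        unfolding GS by (rule dpoly_deriv[OF apos traj t W])
    next
      fix k :: nat and t :: real assume k: "k \<le> p" and t: "0 \<le> t"
      have "\<bar>pv s z a (x t) (w t) (G s z \<omega> k)\<bar> \<le> (\<Sum>j=1..s+z. a j * CC (s+z) (G s z \<omega> k) j a)"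
        by (rule pv_bound[OF a G_prop])
      also have "\<dots> \<le> (\<Sum>j=1..s+z. a j * C j (restr j (s+z) a))"
      proof (rule sum_mono)
        fix j assume j: "j \<in> {1..s+z}"
        have "\<forall>l\<in>{j+1..s+z}. 0 < restr j (s+z) a l" using a by (auto simp: restr_def)
        from CCle[OF this k] have "CC (s+z) (G s z \<omega> k) j a \<le> C j (restr j (s+z) a)"
          by (simp add: CC_restr)
        then show "a j * CC (s+z) (G s z \<omega> k) j a \<le> a j * C j (restr j (s+z) a)"
          using a j by (intro mult_left_mono) (auto simp: less_imp_le)
      qed
      also have "\<dots> = a (s+z) * C (s+z) (\<lambda>_. 0) + (\<Sum>i=1..s+z-1. a i * C i (restr i (s+z) a))"
      proof -
        obtain n where n: "s + z = Suc n" using assms(1) by (cases "s+z") auto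
        have "(\<Sum>j=1..s+z. a j * C j (restr j (s+z) a)) = (\<Sum>j=1..s+z-1. a j * C j (restr j (s+z) a)) + a (s+z) * C (s+z) (restr (s+z) (s+z) a)"
          unfolding n by (simp add: sum.cl_ivl_Suc)
        also have "C (s+z) (restr (s+z) (s+z) a) = C (s+z) (\<lambda>_. 0)" by (rule Cmu)
        finally show ?thesis by simp
      qed
      finally show "\<bar>pv s z a (x t) (w t) (G s z \<omega> k)\<bar> \<le> a (s+z) * C (s+z) (\<lambda>_. 0) + (\<Sum>i=1..s+z-1. a i * C i (restr i (s+z) a))" .
    qed
  qed
qed



end
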